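(* Let $n\ge1$, $t_1<\dots<t_n$, $p_0,\dots,p_n>0$, $q_k=p_k^{-1/2}$, and let $a_k^\pm,b_k^\pm$ ($0\le k\le n$) be the connection coefficients defined in the context. Then: (i) For $z\in\mathbb{C}\setminus(-\infty,0]$ and all $1\le k\le n-1$, $$\frac{a_0^+(z)}{q_0}=\frac{1}{q_k}\big(a_k^+(z)b_k^-(z)-a_k^-(z)b_k^+(z)\big)=\frac{b_n^-(z)}{q_n}.$$ (ii) For $\lambda\in(0,\infty)$ and all $0\le k\le n$, $$q_0\big(|b_k^-(\lambda)|^2-|a_k^-(\lambda)|^2\big)=q_n\big(|a_k^+(\lambda)|^2-|b_k^+(\lambda)|^2\big)=q_k,$$ and consequently $$\frac{|a_k^+(\lambda)|^2}{q_0}+\frac{|a_k^-(\lambda)|^2}{q_n}=\frac{|b_k^+(\lambda)|^2}{q_0}+\frac{|b_k^-(\lambda)|^2}{q_n}.$$ (iii) For $\lambda\in(0,\infty)$ and all $1\le k\le n-1$, $$\frac{b_0^+(\lambda)}{q_0}=\frac{1}{q_k}\Big(b_k^+(\lambda)\overline{b_k^-(\lambda)}-a_k^+(\lambda)\overline{a_k^-(\lambda)}\Big)=-\frac{\overline{a_n^-(\lambda)}}{q_n}.$$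
   Context: For $z\in\mathbb{C}\setminus(-\infty,0]$, $\sqrt z$ is the principal square root. For $1\le k\le n$ let $$L_k(z)=\frac12\begin{bmatrix}\left(1+\frac{q_k}{q_{k-1}}\right)e^{it_k(q_{k-1}-q_k)\sqrt z} & \left(1-\frac{q_k}{q_{k-1}}\right)e^{-it_k(q_{k-1}+q_k)\sqrt z}\\ \left(1-\frac{q_k}{q_{k-1}}\right)e^{it_k(q_{k-1}+q_k)\sqrt z} & \left(1+\frac{q_k}{q_{k-1}}\right)e^{-it_k(q_{k-1}-q_k)\sqrt z}\end{bmatrix},\qquad R_k(z)=L_k(z)^{-1}.$$ The connection coefficients are defined by $a_n^+=1$, $b_n^+=0$, $(a_l^+,b_l^+)^T=R_{l+1}(z)(a_{l+1}^+,b_{l+1}^+)^T$ for $l=n-1,\dots,0$; and $a_0^-=0$, $b_0^-=1$, $(a_j^-,b_j^-)^T=L_j(z)(a_{j-1}^-,b_{j-1}^-)^T$ for $j=1,\dots,n$. *)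

theory Defs
  imports "HOL-Analysis.Analysis"
begin

definition qq :: "(nat \<Rightarrow> real) \<Rightarrow> nat \<Rightarrow> real" where
  "qq p k = p k powr (-1/2)"

definition Lmat :: "(nat \<Rightarrow> real) \<Rightarrow> (nat \<Rightarrow> real) \<Rightarrow> nat \<Rightarrow> complex \<Rightarrow> complex^2^2" where
  "Lmat t q k z =
    (let r = complex_of_real (q k / q (k - 1));
         s = csqrt z;
         tk = complex_of_real (t k);
         dm = complex_of_real (q (k - 1) - q k);
         dp = complex_of_real (q (k - 1) + q k)
     in \<chi> i j.
        if i = 1 then
          (if j = 1 then (1 + r) / 2 * exp (\<i> * tk * dm * s)
           else (1 - r) / 2 * exp (- \<i> * tk * dp * s))
        else
          (if j = 1 then (1 - r) / 2 * exp (\<i> * tk * dp * s)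
           else (1 + r) / 2 * exp (- \<i> * tk * dm * s)))"

definition Rmat :: "(nat \<Rightarrow> real) \<Rightarrow> (nat \<Rightarrow> real) \<Rightarrow> nat \<Rightarrow> complex \<Rightarrow> complex^2^2" where
  "Rmat t q k z = matrix_inv (Lmat t q k z)"

definition vec2 :: "complex \<Rightarrow> complex \<Rightarrow> complex^2" where
  "vec2 a b = (\<chi> i. if i = 1 then a else b)"

text \<open>plus_aux m = (a^+_{n-m}, b^+_{n-m}) for m \<le> n.\<close>
fun plus_aux :: "(nat \<Rightarrow> real) \<Rightarrow> (nat \<Rightarrow> real) \<Rightarrow> nat \<Rightarrow> complex \<Rightarrow> nat \<Rightarrow> complex^2" where
  "plus_aux t q n z 0 = vec2 1 0"
| "plus_aux t q n z (Suc m) = Rmat t q (n - m) z *v plus_aux t q n z m"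

definition conn_plus :: "(nat \<Rightarrow> real) \<Rightarrow> (nat \<Rightarrow> real) \<Rightarrow> nat \<Rightarrow> complex \<Rightarrow> nat \<Rightarrow> complex^2" where
  "conn_plus t q n z l = plus_aux t q n z (n - l)"

fun conn_minus :: "(nat \<Rightarrow> real) \<Rightarrow> (nat \<Rightarrow> real) \<Rightarrow> complex \<Rightarrow> nat \<Rightarrow> complex^2" where
  "conn_minus t q z 0 = vec2 0 1"
| "conn_minus t q z (Suc j) = Lmat t q (Suc j) z *v conn_minus t q z j"

definition a_plus where "a_plus t q n z k = conn_plus t q n z k $ 1"
definition b_plus where "b_plus t q n z k = conn_plus t q n z k $ 2"
definition a_minus where "a_minus t q z k = conn_minus t q z k $ 1"
definition b_minus where "b_minus t q z k = conn_minus t q z k $ 2"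

end

theory Submission
  imports Defs
begin

definition WW :: "complex^2 \<Rightarrow> complex^2 \<Rightarrow> complex" where
  "WW u v = u$1 * v$2 - v$1 * u$2"

definition HH :: "complex^2 \<Rightarrow> complex^2 \<Rightarrow> complex" where
  "HH u v = u$2 * cnj (v$2) - u$1 * cnj (v$1)"

lemma mv2: "(M *v u) $ 1 = M$1$1 * u$1 + M$1$2 * u$2" "(M *v u) $ 2 = M$2$1 * u$1 + M$2$2 * u$2"
  for M :: "complex^2^2"
  by (simp_all add: matrix_vector_mult_def sum_2)

lemma WW_mult: "WW (M *v u) (M *v v) = det M * WW u v"
  by (simp add: WW_def mv2 det_2 algebra_simps)

lemma HH_mult:
  assumes "M$2$1 = cnj (M$1$2)" "M$2$2 = cnj (M$1$1)"
  shows "HH (M *v u) (M *v v) = det M * HH u v"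
  using assms by (simp add: HH_def mv2 det_2 algebra_simps)

lemma vec2_simps[simp]: "vec2 a b $ 1 = a" "vec2 a b $ 2 = b"
  by (simp_all add: vec2_def)

lemma det_L:
  assumes "q (k-1) \<noteq> 0"
  shows "det (Lmat t q k z) = of_real (q k / q (k-1))"
proof -
  have e: "exp x * exp (- x) = 1" for x :: complex by (simp add: exp_minus)
  have e2: "exp (- x) * exp x = 1" for x :: complex by (simp add: exp_minus)
  define r where "r = complex_of_real (q k / q (k - 1))"
  define A where "A = \<i> * complex_of_real (t k) * complex_of_real (q (k - 1) - q k) * csqrt z"
  define B where "B = \<i> * complex_of_real (t k) * complex_of_real (q (k - 1) + q k) * csqrt z"
  have "det (Lmat t q k z) = (1+r)/2 * exp A * ((1+r)/2 * exp (-A)) - (1-r)/2 * exp (-B) * ((1-r)/2 * exp B)"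
    by (simp add: det_2 Lmat_def Let_def r_def A_def B_def)
  also have "\<dots> = (1+r)/2 * ((1+r)/2) * (exp A * exp (-A)) - (1-r)/2 * ((1-r)/2) * (exp (-B) * exp B)"
    by (simp only: mult_ac)
  also have "\<dots> = r" by (simp only: e e2) (simp add: field_simps power2_eq_square)
  finally show ?thesis by (simp add: r_def)
qed

lemma L_conj:
  assumes "lam \<ge> 0"
  shows "Lmat t q k (of_real lam) $ 2 $ 1 = cnj (Lmat t q k (of_real lam) $ 1 $ 2)"
        "Lmat t q k (of_real lam) $ 2 $ 2 = cnj (Lmat t q k (of_real lam) $ 1 $ 1)"
  using assms by (simp_all add: Lmat_def Let_def exp_cnj)

lemma L_R:
  assumes "det M \<noteq> (0::complex)"
  shows "M *v (matrix_inv M *v x) = x"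
proof -
  have "invertible M" using assms invertible_det_nz by blast
  then have "\<exists>A'. M ** A' = mat 1 \<and> A' ** M = mat 1" by (simp add: invertible_def)
  then have "M ** matrix_inv M = mat 1" unfolding matrix_inv_def by (rule someI2_ex) blast
  then show ?thesis by (simp add: matrix_vector_mul_assoc)
qed

lemma telescope:
  fixes g :: "nat \<Rightarrow> complex" and q :: "nat \<Rightarrow> real"
  assumes qp: "\<And>k. k \<le> n \<Longrightarrow> q k > 0"
    and step: "\<And>k. 1 \<le> k \<Longrightarrow> k \<le> n \<Longrightarrow> g k = of_real (q k / q (k-1)) * g (k-1)"
  shows "k \<le> n \<Longrightarrow> g k / of_real (q k) = g 0 / of_real (q 0)"
proof (induction k)
  case 0 then show ?case by simp
next
  case (Suc k)
  have "q k > 0" "q (Suc k) > 0" using Suc qp by auto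
  have e: "g (Suc k) = of_real (q (Suc k)) / of_real (q k) * g k"
    using step[of "Suc k"] Suc by simp
  have nz: "complex_of_real (q k) \<noteq> 0" "complex_of_real (q (Suc k)) \<noteq> 0"
    using \<open>q k > 0\<close> \<open>q (Suc k) > 0\<close> by auto
  have "g (Suc k) / of_real (q (Suc k)) = g k / of_real (q k)"
    unfolding e using nz by (simp add: field_simps)
  then show ?case using Suc by simp
qed


theorem lemma3p4:
  fixes n :: nat and t p :: "nat \<Rightarrow> real"
  assumes hn: "n \<ge> 1"
    and ht: "\<And>i j. 1 \<le> i \<Longrightarrow> i < j \<Longrightarrow> j \<le> n \<Longrightarrow> t i < t j"
    and hp: "\<And>k. k \<le> n \<Longrightarrow> p k > 0"
  defines "q \<equiv> qq p"
  shows
   "(\<forall>z. z \<notin> {w. Im w = 0 \<and> Re w \<le> 0} \<longrightarrow>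
      (\<forall>k. 1 \<le> k \<and> k \<le> n - 1 \<longrightarrow>
        a_plus t q n z 0 / of_real (q 0) =
          (a_plus t q n z k * b_minus t q z k - a_minus t q z k * b_plus t q n z k) / of_real (q k)
        \<and> (a_plus t q n z k * b_minus t q z k - a_minus t q z k * b_plus t q n z k) / of_real (q k)
          = b_minus t q z n / of_real (q n)))
  \<and> (\<forall>lam::real. lam > 0 \<longrightarrow>
      (\<forall>k. k \<le> n \<longrightarrow>
        q 0 * ((cmod (b_minus t q (of_real lam) k))\<^sup>2 - (cmod (a_minus t q (of_real lam) k))\<^sup>2) = q k
        \<and> q n * ((cmod (a_plus t q n (of_real lam) k))\<^sup>2 - (cmod (b_plus t q n (of_real lam) k))\<^sup>2) = q k
        \<and> (cmod (a_plus t q n (of_real lam) k))\<^sup>2 / q 0 + (cmod (a_minus t q (of_real lam) k))\<^sup>2 / q n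
          = (cmod (b_plus t q n (of_real lam) k))\<^sup>2 / q 0 + (cmod (b_minus t q (of_real lam) k))\<^sup>2 / q n))
  \<and> (\<forall>lam::real. lam > 0 \<longrightarrow>
      (\<forall>k. 1 \<le> k \<and> k \<le> n - 1 \<longrightarrow>
        b_plus t q n (of_real lam) 0 / of_real (q 0) =
          (b_plus t q n (of_real lam) k * cnj (b_minus t q (of_real lam) k)
           - a_plus t q n (of_real lam) k * cnj (a_minus t q (of_real lam) k)) / of_real (q k)
        \<and> (b_plus t q n (of_real lam) k * cnj (b_minus t q (of_real lam) k)
           - a_plus t q n (of_real lam) k * cnj (a_minus t q (of_real lam) k)) / of_real (q k)
          = - cnj (a_minus t q (of_real lam) n) / of_real (q n)))"
proof -
  have qpos: "q k > 0" if "k \<le> n" for k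
    using hp[OF that] by (simp add: q_def qq_def)
  have detL: "det (Lmat t q k z) = of_real (q k / q (k-1))" if "1 \<le> k" "k \<le> n" for k z
  proof -
    have "q (k-1) > 0" using qpos that by simp
    then show ?thesis by (intro det_L) auto
  qed
  have detL0: "det (Lmat t q k z) \<noteq> 0" if "1 \<le> k" "k \<le> n" for k z
  proof -
    have "q (k-1) > 0" "q k > 0" using qpos that by simp_all
    then show ?thesis using detL[OF that, of z] by simp
  qed
  have plus_step: "conn_plus t q n z k = Lmat t q k z *v conn_plus t q n z (k-1)"
    if "1 \<le> k" "k \<le> n" for k z
  proof -
    have "n - (k-1) = Suc (n-k)" "n - (n-k) = k" using that by auto
    then have "conn_plus t q n z (k-1) = Rmat t q k z *v conn_plus t q n z k"
      by (simp add: conn_plus_def)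
    then show ?thesis using L_R[OF detL0[OF that, of z]] by (simp add: Rmat_def)
  qed
  have minus_step: "conn_minus t q z k = Lmat t q k z *v conn_minus t q z (k-1)"
    if "1 \<le> k" for k z
    using that by (cases k) auto
  have pn: "conn_plus t q n z n = vec2 1 0" for z by (simp add: conn_plus_def)
  have m0: "conn_minus t q z 0 = vec2 0 1" for z by simp
  have HHsq: "HH u u = of_real ((cmod (u$2))\<^sup>2 - (cmod (u$1))\<^sup>2)" for u
    unfolding HH_def of_real_diff complex_norm_square by simp
  have q0: "q 0 > 0" "q n > 0" using qpos by auto
  have W: "WW (conn_plus t q n z k) (conn_minus t q z k) / of_real (q k)
      = WW (conn_plus t q n z 0) (conn_minus t q z 0) / of_real (q 0)" if "k \<le> n" for k z
  proof (rule telescope[OF qpos _ that, where g = "\<lambda>k. WW (conn_plus t q n z k) (conn_minus t q z k)"])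
    fix k assume "1 \<le> k" "k \<le> n"
    then show "WW (conn_plus t q n z k) (conn_minus t q z k)
       = of_real (q k / q (k-1)) * WW (conn_plus t q n z (k-1)) (conn_minus t q z (k-1))"
      by (simp add: plus_step minus_step WW_mult detL)
  qed
  have Ht: "HH (f k) (g k) / of_real (q k) = HH (f 0) (g 0) / of_real (q 0)"
    if "k \<le> n" "lam \<ge> 0"
      and fs: "\<And>j. 1 \<le> j \<Longrightarrow> j \<le> n \<Longrightarrow> f j = Lmat t q j (of_real lam) *v f (j-1)"
      and gs: "\<And>j. 1 \<le> j \<Longrightarrow> j \<le> n \<Longrightarrow> g j = Lmat t q j (of_real lam) *v g (j-1)"
    for k lam f g
  proof (rule telescope[OF qpos _ that(1), where g = "\<lambda>k. HH (f k) (g k)"])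
    fix j assume j: "1 \<le> j" "j \<le> n"
    show "HH (f j) (g j) = of_real (q j / q (j-1)) * HH (f (j-1)) (g (j-1))"
      unfolding fs[OF j] gs[OF j] HH_mult[OF L_conj[OF that(2)]] detL[OF j] ..
  qed
  have I: "a_plus t q n z 0 / of_real (q 0) =
          (a_plus t q n z k * b_minus t q z k - a_minus t q z k * b_plus t q n z k) / of_real (q k)
        \<and> (a_plus t q n z k * b_minus t q z k - a_minus t q z k * b_plus t q n z k) / of_real (q k)
          = b_minus t q z n / of_real (q n)" if "k \<le> n" for z k
    using W[OF that, of z] W[of n z]
    by (simp add: WW_def a_plus_def b_plus_def a_minus_def b_minus_def pn)
  have II: "q 0 * ((cmod (b_minus t q (of_real lam) k))\<^sup>2 - (cmod (a_minus t q (of_real lam) k))\<^sup>2) = q k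
        \<and> q n * ((cmod (a_plus t q n (of_real lam) k))\<^sup>2 - (cmod (b_plus t q n (of_real lam) k))\<^sup>2) = q k
        \<and> (cmod (a_plus t q n (of_real lam) k))\<^sup>2 / q 0 + (cmod (a_minus t q (of_real lam) k))\<^sup>2 / q n
          = (cmod (b_plus t q n (of_real lam) k))\<^sup>2 / q 0 + (cmod (b_minus t q (of_real lam) k))\<^sup>2 / q n"
    if "k \<le> n" "lam > 0" for k lam
  proof -
    define X where "X = (cmod (b_minus t q (of_real lam) k))\<^sup>2 - (cmod (a_minus t q (of_real lam) k))\<^sup>2"
    define Y where "Y = (cmod (b_plus t q n (of_real lam) k))\<^sup>2 - (cmod (a_plus t q n (of_real lam) k))\<^sup>2"
    have qk: "q k > 0" using qpos that by simp
    have hm: "HH (conn_minus t q (of_real lam) k) (conn_minus t q (of_real lam) k) / of_real (q k)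
      = HH (conn_minus t q (of_real lam) 0) (conn_minus t q (of_real lam) 0) / of_real (q 0)"
      using that by (intro Ht[where lam=lam]) (auto simp: minus_step)
    have hp1: "HH (conn_plus t q n (of_real lam) k) (conn_plus t q n (of_real lam) k) / of_real (q k)
      = HH (conn_plus t q n (of_real lam) 0) (conn_plus t q n (of_real lam) 0) / of_real (q 0)"
      using that by (intro Ht[where lam=lam]) (auto simp: plus_step)
    have hp2: "HH (conn_plus t q n (of_real lam) n) (conn_plus t q n (of_real lam) n) / of_real (q n)
      = HH (conn_plus t q n (of_real lam) 0) (conn_plus t q n (of_real lam) 0) / of_real (q 0)"
      using that by (intro Ht[where lam=lam]) (auto simp: plus_step)
    have "complex_of_real X / of_real (q k) = 1 / of_real (q 0)"
      using hm unfolding HHsq by (simp add: X_def b_minus_def a_minus_def)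
    then have "of_real X = (of_real (q k / q 0) :: complex)" using q0 qk by (simp add: field_simps)
    then have Xe: "X = q k / q 0" using of_real_eq_iff by blast
    have "complex_of_real Y / of_real (q k) = - 1 / of_real (q n)"
      using hp1 hp2 unfolding HHsq by (simp add: Y_def b_plus_def a_plus_def pn)
    then have "of_real Y = (of_real (- q k / q n) :: complex)" using q0 qk by (simp add: field_simps)
    then have Ye: "Y = - q k / q n" using of_real_eq_iff by blast
    have 1: "q 0 * X = q k" using Xe q0 by simp
    have 2: "q n * (- Y) = q k" using Ye q0 by simp
    have 3: "(- Y) / q 0 = X / q n" using Xe Ye q0 by (simp add: field_simps)
    have g: "(A - B) / q 0 = (C - D) / q n \<Longrightarrow> A / q 0 + D / q n = B / q 0 + C / q n" for A B C D :: real
      unfolding diff_divide_distrib by linarith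
    show ?thesis using 1 2 g[OF 3[unfolded X_def Y_def minus_diff_eq]] unfolding X_def Y_def by simp
  qed
  have III: "b_plus t q n (of_real lam) 0 / of_real (q 0) =
          (b_plus t q n (of_real lam) k * cnj (b_minus t q (of_real lam) k)
           - a_plus t q n (of_real lam) k * cnj (a_minus t q (of_real lam) k)) / of_real (q k)
        \<and> (b_plus t q n (of_real lam) k * cnj (b_minus t q (of_real lam) k)
           - a_plus t q n (of_real lam) k * cnj (a_minus t q (of_real lam) k)) / of_real (q k)
          = - cnj (a_minus t q (of_real lam) n) / of_real (q n)"
    if "k \<le> n" "lam > 0" for k lam
  proof -
    have h1: "HH (conn_plus t q n (of_real lam) k) (conn_minus t q (of_real lam) k) / of_real (q k)
      = HH (conn_plus t q n (of_real lam) 0) (conn_minus t q (of_real lam) 0) / of_real (q 0)"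
      using that by (intro Ht[where lam=lam]) (auto simp: minus_step plus_step)
    have h2: "HH (conn_plus t q n (of_real lam) n) (conn_minus t q (of_real lam) n) / of_real (q n)
      = HH (conn_plus t q n (of_real lam) 0) (conn_minus t q (of_real lam) 0) / of_real (q 0)"
      using that by (intro Ht[where lam=lam]) (auto simp: minus_step plus_step)
    show ?thesis using h1 h2
      by (simp add: HH_def a_plus_def b_plus_def a_minus_def b_minus_def pn)
  qed
  show ?thesis
  proof (intro conjI allI impI)
    fix z k assume "1 \<le> k \<and> k \<le> n - 1"
    then have "k \<le> n" by linarith
    note I[OF this, of z]
    then show "a_plus t q n z 0 / of_real (q 0) =
          (a_plus t q n z k * b_minus t q z k - a_minus t q z k * b_plus t q n z k) / of_real (q k)"
      "(a_plus t q n z k * b_minus t q z k - a_minus t q z k * b_plus t q n z k) / of_real (q k)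
          = b_minus t q z n / of_real (q n)" by blast+
  next
    fix lam :: real and k assume "lam > 0" "k \<le> n"
    note II[OF this(2,1)]
    then show "q 0 * ((cmod (b_minus t q (of_real lam) k))\<^sup>2 - (cmod (a_minus t q (of_real lam) k))\<^sup>2) = q k"
      "q n * ((cmod (a_plus t q n (of_real lam) k))\<^sup>2 - (cmod (b_plus t q n (of_real lam) k))\<^sup>2) = q k"
      "(cmod (a_plus t q n (of_real lam) k))\<^sup>2 / q 0 + (cmod (a_minus t q (of_real lam) k))\<^sup>2 / q n
          = (cmod (b_plus t q n (of_real lam) k))\<^sup>2 / q 0 + (cmod (b_minus t q (of_real lam) k))\<^sup>2 / q n"
      by blast+
  next
    fix lam :: real and k assume "lam > 0" "1 \<le> k \<and> k \<le> n - 1"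
    then have "k \<le> n" by linarith
    note III[OF this \<open>lam > 0\<close>]
    then show "b_plus t q n (of_real lam) 0 / of_real (q 0) =
          (b_plus t q n (of_real lam) k * cnj (b_minus t q (of_real lam) k)
           - a_plus t q n (of_real lam) k * cnj (a_minus t q (of_real lam) k)) / of_real (q k)"
      "(b_plus t q n (of_real lam) k * cnj (b_minus t q (of_real lam) k)
           - a_plus t q n (of_real lam) k * cnj (a_minus t q (of_real lam) k)) / of_real (q k)
          = - cnj (a_minus t q (of_real lam) n) / of_real (q n)" by blast+
  qed
qed

end
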